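(* Under the hypotheses of the following statement, assume in addition that the solution $s(t)$ is persistent. Then $s(t)\to\bar s$ as $t\to\infty$. Statement: consider the generalized mass-action system $\dot s=f(u,s)=\sum_{j=1}^{r}u_j(t)\,s^{v_{\cdot j}}(v'_{\cdot j}-v_{\cdot j})$, $s(0)=s_0\in\mathbb{R}^n_{\ge0}$, with $u:[0,\infty)\to\mathbb{U}\subset\mathbb{R}^r_{>0}$, $\lim_{t\to\infty}u(t)=\bar u\in\mathbb{R}^r_{>0}$, $s(t)$ a bounded solution defined for all $t\ge0$, $\bar s\in\mathbb{R}^n_{>0}$ the unique equilibrium of $\dot s=f(\bar u,s)$ in $(s_0+\mathscr{S})\cap\mathbb{R}^n_{>0}$, and $V$ an ISS-Lyapunov function with respect to $(\bar u,\bar s)$ for this system.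
   Context: A CRN has species $S_1,\dots,S_n$ and reactions $v_{\cdot j}\to v'_{\cdot j}$, $j=1,\dots,r$, $v_{\cdot j},v'_{\cdot j}\in\mathbb{Z}^n_{\ge0}$, $v_{\cdot j}\ne v'_{\cdot j}$; $s^{v}=\prod_i s_i^{v_i}$ with $0^0=1$; $\mathscr{S}=\mathrm{span}\{v'_{\cdot j}-v_{\cdot j}\}$ is the stoichiometric subspace. A solution $s(t)$ is persistent if $\liminf_{t\to\infty}s_i(t)>0$ for every $i=1,\dots,n$. ISS-Lyapunov function with respect to $(\bar u,\bar s)$: a continuous $V:\mathbb{R}^n_{\ge0}\to\mathbb{R}_{\ge0}$ such that (i) $V|_{\mathbb{R}^n_{>0}}$ is $C^1$; (ii) $V(s)\to\infty$ as $|s|\to\infty$; (iii) $V(\bar s)=0$ and $V(s)>0$ for $s\ne\bar s$; (iv) for each compact $F\subset\mathbb{R}^n_{\ge0}$ there exist class $\mathcal{K}_\infty$ functions $\alpha,\rho$ (continuous, strictly increasing, zero at zero, unbounded) with $\nabla V(s)^\top f(u,s)\le-\alpha(|s-\bar s|)+\rho(|u-\bar u|)$ for all $u\in\mathbb{U}$, $s\in F\cap(s_0+\mathscr{S})\cap\mathbb{R}^n_{>0}$. *)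

theory Defs
  imports "HOL-Analysis.Analysis"
begin

text \<open>Species are indexed by a finite type 'n, reactions by a finite type 'r.
  A reaction j has reactant complex v j and product complex v' j (in nat^'n).\<close>

definition nonneg_orthant :: "(real^'n) set" where
  "nonneg_orthant = {x. \<forall>i. 0 \<le> x $ i}"

definition pos_orthant :: "(real^'n) set" where
  "pos_orthant = {x. \<forall>i. 0 < x $ i}"

text \<open>Monomial s^v with 0^0 = 1 (as for nat powers in Isabelle).\<close>
definition monom :: "real^'n \<Rightarrow> nat^'n \<Rightarrow> real" where
  "monom s w = (\<Prod>i\<in>UNIV. (s $ i) ^ (w $ i))"

definition reaction_vec :: "nat^'n \<Rightarrow> nat^'n \<Rightarrow> real^'n" where
  "reaction_vec w w' = (\<chi> i. real (w' $ i) - real (w $ i))"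

definition gma_field ::
  "('r::finite \<Rightarrow> nat^'n) \<Rightarrow> ('r \<Rightarrow> nat^'n) \<Rightarrow> real^'r \<Rightarrow> real^'n \<Rightarrow> real^'n" where
  "gma_field v v' u s = (\<Sum>j\<in>UNIV. (u $ j * monom s (v j)) *\<^sub>R reaction_vec (v j) (v' j))"

definition stoich_subspace ::
  "('r::finite \<Rightarrow> nat^'n) \<Rightarrow> ('r \<Rightarrow> nat^'n) \<Rightarrow> (real^'n) set" where
  "stoich_subspace v v' = span (range (\<lambda>j. reaction_vec (v j) (v' j)))"

definition class_Kinf :: "(real \<Rightarrow> real) \<Rightarrow> bool" where
  "class_Kinf a \<longleftrightarrow> continuous_on {0..} a \<and> strict_mono_on {0..} a \<and> a 0 = 0
     \<and> filterlim a at_top at_top"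

definition ISS_Lyapunov ::
  "('r::finite \<Rightarrow> nat^'n) \<Rightarrow> ('r \<Rightarrow> nat^'n) \<Rightarrow> (real^'r) set \<Rightarrow> real^'n
    \<Rightarrow> real^'r \<Rightarrow> real^'n \<Rightarrow> (real^'n \<Rightarrow> real) \<Rightarrow> bool" where
  "ISS_Lyapunov v v' U s0 ubar sbar V \<longleftrightarrow>
     continuous_on nonneg_orthant V \<and> (\<forall>x\<in>nonneg_orthant. 0 \<le> V x) \<and>
     (\<exists>grad. (\<forall>x\<in>pos_orthant. (V has_derivative (\<lambda>h. grad x \<bullet> h)) (at x))
        \<and> continuous_on pos_orthant grad
        \<and> (\<forall>M. \<exists>R. \<forall>x\<in>nonneg_orthant. R \<le> norm x \<longrightarrow> M \<le> V x)
        \<and> V sbar = 0 \<and> (\<forall>x\<in>nonneg_orthant. x \<noteq> sbar \<longrightarrow> 0 < V x)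
        \<and> (\<forall>F. compact F \<and> F \<subseteq> nonneg_orthant \<longrightarrow>
             (\<exists>\<alpha> \<rho>. class_Kinf \<alpha> \<and> class_Kinf \<rho> \<and>
               (\<forall>u\<in>U. \<forall>x\<in>F \<inter> (\<lambda>y. s0 + y) ` stoich_subspace v v' \<inter> pos_orthant.
                  grad x \<bullet> gma_field v v' u x \<le> - \<alpha> (norm (x - sbar)) + \<rho> (norm (u - ubar))))))"

end

theory Submission
  imports Defs
begin

lemma closed_nonneg: "closed (nonneg_orthant :: (real^'n) set)"
proof -
  have "(nonneg_orthant :: (real^'n) set) = (\<Inter>i\<in>UNIV. {x::real^'n. 0 \<le> x $ i})"
    unfolding nonneg_orthant_def by auto
  moreover have "closed (\<Inter>i\<in>UNIV. {x::real^'n. 0 \<le> x $ i})"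
    by (intro closed_INT ballI closed_Collect_le continuous_intros)
  ultimately show ?thesis by simp
qed

lemma pos_sub_nonneg: "pos_orthant \<subseteq> nonneg_orthant"
  unfolding pos_orthant_def nonneg_orthant_def by (auto intro: less_imp_le)

lemma field_in_span:
  "gma_field v v' u x \<in> stoich_subspace v v'"
  unfolding gma_field_def stoich_subspace_def
  by (intro span_sum span_scale span_base) auto

lemma invariance:
  fixes s :: "real \<Rightarrow> real^'n::finite" and v v' :: "'r::finite \<Rightarrow> nat^'n"
  assumes s_ode: "\<And>t. 0 \<le> t \<Longrightarrow>
                 (s has_vector_derivative gma_field v v' (u t) (s t)) (at t within {0..})"
    and s_init: "s 0 = s0" and t: "0 \<le> t"
  shows "s t \<in> (\<lambda>y. s0 + y) ` stoich_subspace v v'"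
proof -
  let ?S = "range (\<lambda>j. reaction_vec (v j) (v' j))"
  obtain y z where y: "y \<in> span ?S" and z: "\<And>w. w \<in> span ?S \<Longrightarrow> orthogonal z w"
    and eq: "s t - s0 = y + z"
    using orthogonal_subspace_decomp_exists by blast
  have dz: "((\<lambda>\<tau>. z \<bullet> s \<tau>) has_derivative (\<lambda>h. 0)) (at x within {0..t})" if "x \<in> {0..t}" for x
  proof -
    have "(s has_vector_derivative gma_field v v' (u x) (s x)) (at x within {0..t})"
      using s_ode[of x] that by (auto intro: has_vector_derivative_within_subset)
    then have "(s has_derivative (\<lambda>h. h *\<^sub>R gma_field v v' (u x) (s x))) (at x within {0..t})"
      by (simp add: has_vector_derivative_def)
    then have "((\<lambda>\<tau>. z \<bullet> s \<tau>) has_derivative (\<lambda>h. z \<bullet> (h *\<^sub>R gma_field v v' (u x) (s x)))) (at x within {0..t})"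
      by (intro derivative_intros)
    moreover have "z \<bullet> gma_field v v' (u x) (s x) = 0"
      using z[of "gma_field v v' (u x) (s x)"] field_in_span[of v v' "u x" "s x"]
      unfolding stoich_subspace_def orthogonal_def by auto
    ultimately show ?thesis by simp
  qed
  have cont: "continuous_on {0..t} (\<lambda>\<tau>. z \<bullet> s \<tau>)"
    using dz by (meson has_derivative_continuous continuous_on_eq_continuous_within)
  have "z \<bullet> s t = z \<bullet> s 0"
    by (rule has_derivative_zero_unique_strong_interval[of "{}" 0 t _ "z \<bullet> s 0"])
       (use cont dz t in auto)
  then have "z \<bullet> (s t - s0) = 0" using s_init by (simp add: inner_diff_right)
  moreover have "z \<bullet> y = 0" using z[OF y] by (simp add: orthogonal_def)
  ultimately have "z \<bullet> z = 0" using eq by (simp add: inner_add_right)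
  then have "z = 0" by simp
  then have "s t = s0 + y" using eq by (simp add: algebra_simps)
  then show ?thesis using y unfolding stoich_subspace_def by blast
qed

theorem corollary3p3:
  fixes v v' :: "'r::finite \<Rightarrow> nat^'n::finite"
    and U :: "(real^'r) set" and u :: "real \<Rightarrow> real^'r" and ubar :: "real^'r"
    and s :: "real \<Rightarrow> real^'n" and s0 sbar :: "real^'n" and V :: "real^'n \<Rightarrow> real"
  assumes reac: "\<And>j. v j \<noteq> v' j"
    and U_pos: "U \<subseteq> pos_orthant"
    and u_in: "\<And>t. 0 \<le> t \<Longrightarrow> u t \<in> U"
    and u_lim: "(u \<longlongrightarrow> ubar) at_top"
    and ubar_pos: "ubar \<in> pos_orthant"
    and s0_nonneg: "s0 \<in> nonneg_orthant"
    and s_init: "s 0 = s0"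
    and s_ode: "\<And>t. 0 \<le> t \<Longrightarrow>
                 (s has_vector_derivative gma_field v v' (u t) (s t)) (at t within {0..})"
    and s_bdd: "bounded (s ` {0..})"
    and sbar_in: "sbar \<in> (\<lambda>y. s0 + y) ` stoich_subspace v v' \<inter> pos_orthant"
    and sbar_eq: "gma_field v v' ubar sbar = 0"
    and sbar_unique: "\<And>x. x \<in> (\<lambda>y. s0 + y) ` stoich_subspace v v' \<inter> pos_orthant \<Longrightarrow>
                        gma_field v v' ubar x = 0 \<Longrightarrow> x = sbar"
    and V_ISS: "ISS_Lyapunov v v' U s0 ubar sbar V"
    and persistent: "\<And>i. Liminf at_top (\<lambda>t. ereal (s t $ i)) > 0"
  shows "(s \<longlongrightarrow> sbar) at_top"
proof -
  let ?S = "stoich_subspace v v'"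
  let ?f = "\<lambda>t. gma_field v v' (u t) (s t)"
  let ?W = "\<lambda>t. V (s t)"
  obtain grad where G: "(\<forall>x\<in>pos_orthant. (V has_derivative (\<lambda>h. grad x \<bullet> h)) (at x))
        \<and> continuous_on pos_orthant grad
        \<and> (\<forall>M. \<exists>R. \<forall>x\<in>nonneg_orthant. R \<le> norm x \<longrightarrow> M \<le> V x)
        \<and> V sbar = 0 \<and> (\<forall>x\<in>nonneg_orthant. x \<noteq> sbar \<longrightarrow> 0 < V x)
        \<and> (\<forall>F. compact F \<and> F \<subseteq> nonneg_orthant \<longrightarrow>
             (\<exists>\<alpha> \<rho>. class_Kinf \<alpha> \<and> class_Kinf \<rho> \<and>
               (\<forall>u\<in>U. \<forall>x\<in>F \<inter> (\<lambda>y. s0 + y) ` stoich_subspace v v' \<inter> pos_orthant.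
                  grad x \<bullet> gma_field v v' u x \<le> - \<alpha> (norm (x - sbar)) + \<rho> (norm (u - ubar)))))"
    using V_ISS unfolding ISS_Lyapunov_def by (drule_tac conjunct2, drule_tac conjunct2, erule_tac exE) (erule that)
  have gradV: "\<And>x. x\<in>pos_orthant \<Longrightarrow> (V has_derivative (\<lambda>h. grad x \<bullet> h)) (at x)"
    and Vs0: "V sbar = 0" and Vpos: "\<And>x. x\<in>nonneg_orthant \<Longrightarrow> x \<noteq> sbar \<Longrightarrow> 0 < V x"
    using G by simp_all
  have ISS: "\<And>F. compact F \<Longrightarrow> F \<subseteq> nonneg_orthant \<Longrightarrow>
             (\<exists>\<alpha> \<rho>. class_Kinf \<alpha> \<and> class_Kinf \<rho> \<and>
               (\<forall>u\<in>U. \<forall>x\<in>F \<inter> (\<lambda>y. s0 + y) ` stoich_subspace v v' \<inter> pos_orthant.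
                  grad x \<bullet> gma_field v v' u x \<le> - \<alpha> (norm (x - sbar)) + \<rho> (norm (u - ubar))))"
    using G by blast
  have Vcont: "continuous_on nonneg_orthant V" and Vnn: "\<And>x. x\<in>nonneg_orthant \<Longrightarrow> 0 \<le> V x"
    using V_ISS unfolding ISS_Lyapunov_def by auto
  let ?D = "\<lambda>t. grad (s t) \<bullet> ?f t"
  have inv: "\<And>t. 0 \<le> t \<Longrightarrow> s t \<in> (\<lambda>y. s0 + y) ` ?S"
    using invariance[OF s_ode s_init] by blast
  have "\<forall>\<^sub>F t in at_top. \<forall>i. 0 < s t $ i"
  proof (rule eventually_all_finite)
    fix i
    have "\<forall>\<^sub>F t in at_top. ereal 0 < ereal (s t $ i)"
      using less_LiminfD[of "ereal 0"] persistent[of i] zero_ereal_def by metis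
    then show "\<forall>\<^sub>F t in at_top. 0 < s t $ i" by simp
  qed
  then obtain N where N: "\<And>t. t \<ge> N \<Longrightarrow> \<forall>i. 0 < s t $ i"
    unfolding eventually_at_top_linorder by blast
  define T where "T = max N 1"
  have T0: "T > 0" unfolding T_def by simp
  have spos: "\<And>t. t \<ge> T \<Longrightarrow> s t \<in> pos_orthant"
    using N unfolding T_def pos_orthant_def by simp
  have snn: "\<And>t. t \<ge> T \<Longrightarrow> s t \<in> nonneg_orthant"
    using spos pos_sub_nonneg by blast
  obtain M where M: "\<And>t. t \<ge> 0 \<Longrightarrow> norm (s t) \<le> M"
    using s_bdd unfolding bounded_iff by auto
  define F where "F = cball (0::real^'n) M \<inter> nonneg_orthant"
  have Fc: "compact F" unfolding F_def
    by (intro compact_Int_closed closed_nonneg compact_cball)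
  have Fsub: "F \<subseteq> nonneg_orthant" unfolding F_def by auto
  have sF: "\<And>t. t \<ge> T \<Longrightarrow> s t \<in> F"
    using M snn T0 unfolding F_def by auto
  obtain \<alpha> \<rho> where Ka: "class_Kinf \<alpha>" and Kr: "class_Kinf \<rho>" and
    ineq0: "\<forall>uu\<in>U. \<forall>x\<in>F \<inter> (\<lambda>y. s0 + y) ` ?S \<inter> pos_orthant.
                  grad x \<bullet> gma_field v v' uu x \<le> - \<alpha> (norm (x - sbar)) + \<rho> (norm (uu - ubar))"
    using ISS[OF Fc Fsub] by (elim exE conjE) (erule that, assumption+)
  have Dle: "?D t \<le> - \<alpha> (norm (s t - sbar)) + \<rho> (norm (u t - ubar))" if "t \<ge> T" for t
  proof -
    have "u t \<in> U" using u_in that T0 by simp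
    moreover have "s t \<in> F \<inter> (\<lambda>y. s0 + y) ` ?S \<inter> pos_orthant"
      using inv[of t] sF[OF that] spos[OF that] that T0 by simp
    ultimately show ?thesis using ineq0 by blast
  qed
  have derW: "(?W has_real_derivative ?D t) (at t)" if "t \<ge> T" for t
  proof -
    have "(s has_vector_derivative ?f t) (at t within {0<..})"
      by (rule has_vector_derivative_within_subset[OF s_ode[of t]]) (use that T0 in auto)
    moreover have "at t within {0<..} = at t"
      by (rule at_within_open) (use that T0 in auto)
    ultimately have "(s has_vector_derivative ?f t) (at t)"
      by simp
    then have ds: "(s has_derivative (\<lambda>h. h *\<^sub>R ?f t)) (at t)"
      by (simp add: has_vector_derivative_def)
    have "(?W has_derivative (\<lambda>h. grad (s t) \<bullet> (h *\<^sub>R ?f t))) (at t)"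
      using diff_chain_at[OF ds gradV[OF spos[OF that]]] by (simp only: o_def)
    moreover have "(\<lambda>h. grad (s t) \<bullet> (h *\<^sub>R ?f t)) = (*) (?D t)"
      by (auto simp: inner_scaleR_right)
    ultimately show ?thesis by (simp add: has_field_derivative_def)
  qed
  have ramono: "\<And>a. class_Kinf a \<Longrightarrow> 0 \<le> x \<Longrightarrow> x < y \<Longrightarrow> a x < a y" for x y
    unfolding class_Kinf_def strict_mono_on_def by auto
  have rho_lim: "((\<lambda>t. \<rho> (norm (u t - ubar))) \<longlongrightarrow> 0) at_top"
  proof -
    have "((\<lambda>t. norm (u t - ubar)) \<longlongrightarrow> 0) at_top"
      using u_lim by (simp add: tendsto_norm_zero LIM_zero)
    from continuous_on_tendsto_compose[OF _ this, of "{0..}" \<rho>]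
    show ?thesis using Kr unfolding class_Kinf_def by (auto simp: o_def)
  qed
  show ?thesis
  proof (rule tendstoI)
    fix \<epsilon> :: real assume eps: "\<epsilon> > 0"
    define K where "K = F - ball sbar \<epsilon>"
    have Kc: "compact K" unfolding K_def using Fc by (intro compact_diff) auto
    have "\<exists>c>0. \<forall>x\<in>K. c \<le> V x"
    proof (cases "K = {}")
      case True then show ?thesis by (intro exI[of _ 1]) auto
    next
      case False
      have "continuous_on K V"
        by (rule continuous_on_subset[OF Vcont]) (use Fsub in \<open>auto simp: K_def\<close>)
      then obtain x0 where x0: "x0 \<in> K" "\<And>y. y \<in> K \<Longrightarrow> V x0 \<le> V y"
        using continuous_attains_inf[OF Kc False] by blast
      have "V x0 > 0" using x0(1) Fsub eps unfolding K_def by (intro Vpos) auto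
      then show ?thesis using x0 by blast
    qed
    then obtain c where c0: "c > 0" and cK: "\<And>x. x \<in> K \<Longrightarrow> c \<le> V x" by blast
    have sbar_nn: "sbar \<in> nonneg_orthant" using sbar_in pos_sub_nonneg by blast
    obtain d where d0: "d > 0" and dV: "\<And>x. x \<in> nonneg_orthant \<Longrightarrow> dist x sbar < d \<Longrightarrow> dist (V x) (V sbar) < c"
      using Vcont sbar_nn c0 unfolding continuous_on_iff by metis
    define r where "r = d / 2"
    have r0: "r > 0" using d0 unfolding r_def by simp
    have rV: "V x < c" if "x \<in> nonneg_orthant" "dist x sbar \<le> r" for x
      using dV[OF that(1)] that(2) d0 Vs0 unfolding r_def by (auto simp: dist_real_def)
    define a where "a = \<alpha> r"
    have a0: "a > 0" using ramono[OF Ka, of 0 r] r0 Ka unfolding a_def class_Kinf_def by auto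
    have "\<forall>\<^sub>F t in at_top. dist (\<rho> (norm (u t - ubar))) 0 < a/2"
      using tendstoD[OF rho_lim, of "a/2"] a0 by simp
    then obtain T1 where T1': "\<And>t. t \<ge> T1 \<Longrightarrow> dist (\<rho> (norm (u t - ubar))) 0 < a/2"
      unfolding eventually_at_top_linorder by blast
    have T1: "\<rho> (norm (u t - ubar)) < a / 2" if "t \<ge> T1" for t
      using T1'[OF that] by (auto simp: dist_real_def)
    define T2 where "T2 = max T T1"
    have key: "?D t \<le> - a / 2" if "t \<ge> T2" "dist (s t) sbar > r" for t
    proof -
      have "a \<le> \<alpha> (norm (s t - sbar))"
        using ramono[OF Ka, of r "norm (s t - sbar)"] that r0 unfolding a_def
        by (auto simp: dist_norm)
      then show ?thesis using Dle[of t] T1[of t] that unfolding T2_def by auto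
    qed
    have "\<exists>t1\<ge>T2. dist (s t1) sbar \<le> r"
    proof (rule ccontr)
      assume "\<not> ?thesis"
      then have far: "\<And>t. t \<ge> T2 \<Longrightarrow> dist (s t) sbar > r" by force
      define t where "t = T2 + 2 * (?W T2 + 1) / a"
      have "?W t + a / 2 * t \<le> ?W T2 + a / 2 * T2"
      proof (rule DERIV_nonpos_imp_nonincreasing[where f = "\<lambda>t. ?W t + a / 2 * t"])
        show "T2 \<le> t" unfolding t_def using a0 Vnn[OF snn[of T2]] unfolding T2_def by auto
        fix x assume "T2 \<le> x" "x \<le> t"
        then have "((\<lambda>t. ?W t + a / 2 * t) has_real_derivative ?D x + a / 2) (at x)"
          using derW[of x] unfolding T2_def by (auto intro!: derivative_eq_intros)
        moreover have "?D x + a / 2 \<le> 0" using key[of x] far[of x] \<open>T2 \<le> x\<close> by auto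
        ultimately show "\<exists>y. ((\<lambda>t. ?W t + a / 2 * t) has_real_derivative y) (at x) \<and> y \<le> 0" by blast
      qed
      moreover have "a / 2 * (t - T2) = a / 2 * t - a / 2 * T2" by (simp add: right_diff_distrib)
      ultimately have "?W t \<le> ?W T2 - a / 2 * (t - T2)" by linarith
      also have "\<dots> = -1" unfolding t_def using a0 by (simp add: field_simps)
      finally have "?W t < 0" by simp
      moreover have "t \<ge> T"
      proof -
        have "0 \<le> ?W T2" using Vnn[OF snn[of T2]] unfolding T2_def by auto
        then have "0 \<le> 2 * (?W T2 + 1) / a" using a0 by (intro divide_nonneg_pos) auto
        then show ?thesis unfolding t_def T2_def by linarith
      qed
      ultimately show False using Vnn[OF snn] by force
    qed
    then obtain t1 where t1: "t1 \<ge> T2" "dist (s t1) sbar \<le> r" by blast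
    have Wlt: "?W t < c" if "t \<ge> t1" for t
    proof (rule ccontr)
      assume Wge: "\<not> ?W t < c"
      define A where "A = {t1..t} \<inter> (\<lambda>\<tau>. dist (s \<tau>) sbar) -` {..r}"
      have scont: "continuous_on {t1..t} s"
      proof -
        have "\<forall>x\<in>{t1..t}. (s has_vector_derivative ?f x) (at x within {t1..t})"
        proof
          fix x assume x: "x \<in> {t1..t}"
          show "(s has_vector_derivative ?f x) (at x within {t1..t})"
            by (rule has_vector_derivative_within_subset[OF s_ode[of x]])
               (use x t1 T0 in \<open>auto simp: T2_def\<close>)
        qed
        then show ?thesis
          by (meson continuous_on_eq_continuous_within has_vector_derivative_continuous)
      qed
      have Acl: "closed A" unfolding A_def
        by (intro continuous_closed_preimage continuous_on_dist scont continuous_on_const) auto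
      have t1A: "t1 \<in> A" using t1 that unfolding A_def by auto
      have Abdd: "bdd_above A" unfolding A_def by (auto intro: bdd_aboveI[of _ t])
      define t3 where "t3 = Sup A"
      have t3A: "t3 \<in> A" unfolding t3_def using closed_contains_Sup[OF _ Abdd Acl] t1A by blast
      have t3le: "t1 \<le> t3" "t3 \<le> t" using t3A unfolding A_def by auto
      have W3: "?W t3 < c" using t3A t3le t1 snn[of t3] rV unfolding A_def T2_def by auto
      have "t3 \<noteq> t" using W3 Wge by auto
      then have t3t: "t3 < t" using t3le by simp
      have farx: "dist (s x) sbar > r" if "t3 < x" "x \<le> t" for x
      proof (rule ccontr)
        assume "\<not> ?thesis"
        then have "x \<in> A" using that t3le unfolding A_def by auto
        then have "x \<le> t3" unfolding t3_def using Abdd by (rule cSup_upper)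
        then show False using that by simp
      qed
      obtain z where z: "t3 < z" "z < t" "?W t - ?W t3 = (t - t3) * ?D z"
        using MVT2[OF t3t, of ?W ?D] derW t3le t1 unfolding T2_def by auto
      have "?D z \<le> - a / 2" using key[of z] farx[of z] z t3le t1 by auto
      then have "(t - t3) * ?D z \<le> 0" using t3t a0
        by (simp add: mult_nonneg_nonpos)
      then show False using z W3 Wge by auto
    qed
    show "\<forall>\<^sub>F t in at_top. dist (s t) sbar < \<epsilon>"
      unfolding eventually_at_top_linorder
    proof (intro exI allI impI)
      fix t assume "t \<ge> t1"
      then have "s t \<in> F" "?W t < c" using Wlt sF t1 unfolding T2_def by auto
      then have "s t \<notin> K" using cK by force
      then show "dist (s t) sbar < \<epsilon>" using \<open>s t \<in> F\<close> unfolding K_def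
        by (auto simp: dist_commute)
    qed
  qed
qed

end
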